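(* For $n\ge 0$ let $\Theta_n=\{\theta\in\mathcal{I}_n\cap\mathcal{L}: |\theta|\text{ is minimal}\}$. Then $\Theta_n=\{f^{(n)}\}$ if $n$ is odd, and $\Theta_n=\{f^{(n)},\,f^{(n)}+g^{(n)}\}$ if $n$ is even.
   Context: $\mathbb{F}=\mathrm{GF}(2)$, $R=\mathbb{F}[x,z]$, $|\cdot|$ is total degree. $M=\mathbb{F}[x^{-1},z^{-1}]$ is an $R$-module via $x^pz^q\circ x^{-u}z^{-v}=x^{p-u}z^{q-v}$ if $p\le u,q\le v$ and $0$ otherwise, extended bilinearly; $\mathcal{I}_F=\{\varphi\in R:\varphi\circ F=0\}$. $\mathcal{L}$ is the set of non-zero forms $\varphi\in R$ whose coefficient of $x^{|\varphi|}$ equals $1$. Let $(r_0,r_1,\ldots)$ be the binary sequence with $r_i=1$ if $i=2^j-1$ for some $j\ge 0$ and $r_i=0$ otherwise. For $n\ge0$, $R^{(-n)}=\sum_{j=-n}^{0}r_{-j}\,x^{j}z^{-n-j}$ and $\mathcal{I}_n=\mathcal{I}_{R^{(-n)}}$. For a form $f\in R$ and homogeneous $G\in M$, $\Delta(f;G)$ is the coefficient of $x^{|f|+|G|}z^0$ in $f\cdot G$ computed in $\mathbb{F}[x^{\pm1},z^{\pm1}]$ if $|f|+|G|\le 0$, and $0$ otherwise. Define forms recursively: $(f^{(0)},g^{(0)})=(x+z,z)$; for $k\ge0$ let $d_k=|g^{(k)}|-|f^{(k)}|$ and $\Delta_k=\Delta(f^{(k)};R^{(-1-k)})$, and set $(f^{(k+1)},g^{(k+1)})=(f^{(k)},zg^{(k)})$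 if $\Delta_k=0$; $=(f^{(k)}+x^{-d_k}g^{(k)},\,zg^{(k)})$ if $\Delta_k=1$ and $d_k\le0$; $=(x^{d_k}f^{(k)}+g^{(k)},\,zf^{(k)})$ if $\Delta_k=1$ and $d_k>0$. *)

theory Defs
  imports Main
begin

text \<open>Polynomials over GF(2) in two variables x, z are represented by their (finite)
  set of monomials with coefficient 1: (p,q) stands for x^p z^q.
  Elements of M = F[x^-1,z^-1] are likewise finite sets, (u,v) standing for x^-u z^-v.\<close>

type_synonym poly2 = "(nat \<times> nat) set"

definition padd :: "poly2 \<Rightarrow> poly2 \<Rightarrow> poly2" where
  "padd A B = (A - B) \<union> (B - A)"

definition xshift :: "nat \<Rightarrow> poly2 \<Rightarrow> poly2" where
  "xshift a A = (\<lambda>(p,q). (p + a, q)) ` A"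

definition zshift :: "nat \<Rightarrow> poly2 \<Rightarrow> poly2" where
  "zshift a A = (\<lambda>(p,q). (p, q + a)) ` A"

definition is_form :: "poly2 \<Rightarrow> bool" where
  "is_form A \<longleftrightarrow> finite A \<and> (\<exists>d. \<forall>(p,q)\<in>A. p + q = d)"

text \<open>Total degree of a nonzero form (for elements of M: minus the degree).\<close>
definition tdeg :: "poly2 \<Rightarrow> nat" where
  "tdeg A = Max ((\<lambda>(p,q). p + q) ` A)"

text \<open>The module action of R on M.\<close>
definition act :: "poly2 \<Rightarrow> poly2 \<Rightarrow> poly2" where
  "act \<phi> F = {(a,b). odd (card {(m,w) \<in> \<phi> \<times> F.
      fst m \<le> fst w \<and> snd m \<le> snd w \<and> fst w - fst m = a \<and> snd w - snd m = b})}"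

definition annih :: "poly2 \<Rightarrow> poly2 set" where
  "annih F = {\<phi>. finite \<phi> \<and> act \<phi> F = {}}"

definition Lset :: "poly2 set" where
  "Lset = {\<phi>. is_form \<phi> \<and> \<phi> \<noteq> {} \<and> (tdeg \<phi>, 0) \<in> \<phi>}"

definition rseq :: "nat \<Rightarrow> bool" where
  "rseq i \<longleftrightarrow> (\<exists>j. i = 2 ^ j - 1)"

definition Rn :: "nat \<Rightarrow> poly2" where
  "Rn n = {(i, n - i) | i. i \<le> n \<and> rseq i}"

definition In :: "nat \<Rightarrow> poly2 set" where
  "In n = annih (Rn n)"

text \<open>Coefficient of x^a z^b in the Laurent product f * G, f in R, G in M.\<close>
definition laurent_coeff :: "poly2 \<Rightarrow> poly2 \<Rightarrow> int \<Rightarrow> int \<Rightarrow> bool" where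
  "laurent_coeff f G a b = odd (card {(m,w) \<in> f \<times> G.
      int (fst m) - int (fst w) = a \<and> int (snd m) - int (snd w) = b})"

text \<open>Delta(f;G), with |G| = - tdeg G.\<close>
definition Delta :: "poly2 \<Rightarrow> poly2 \<Rightarrow> bool" where
  "Delta f G = (if int (tdeg f) - int (tdeg G) \<le> 0
                then laurent_coeff f G (int (tdeg f) - int (tdeg G)) 0 else False)"

fun fg :: "nat \<Rightarrow> poly2 \<times> poly2" where
  "fg 0 = ({(1,0),(0,1)}, {(0,1)})"
| "fg (Suc k) = (let (f, g) = fg k; d = int (tdeg g) - int (tdeg f) in
      if \<not> Delta f (Rn (Suc k)) then (f, zshift 1 g)
      else if d \<le> 0 then (padd f (xshift (nat (- d)) g), zshift 1 g)
      else (padd (xshift (nat d) f) g, zshift 1 f))"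

definition Theta :: "nat \<Rightarrow> poly2 set" where
  "Theta n = {\<theta> \<in> In n \<inter> Lset. \<forall>\<theta>' \<in> In n \<inter> Lset. tdeg \<theta> \<le> tdeg \<theta>'}"

end

theory Submission
  imports Defs "HOL-Library.Z2" "HOL-Computational_Algebra.Formal_Power_Series"
begin
unbundle fps_syntax


lemma bit_add_self [simp]: "(a::bit) + a = 0"
  by (cases a) simp_all

lemma bit_mult_self [simp]: "(a::bit) * a = a"
  by (cases a) simp_all

lemma fps_bit_add_self [simp]: "(f::bit fps) + f = 0"
  by (rule fps_ext) (simp only: fps_add_nth bit_add_self fps_zero_nth)

lemma fps_two_bit: "(2::bit fps) = 0"
  by (metis fps_bit_add_self one_add_one)

lemma fps_two_mult_bit: "2 * (f::bit fps) = 0"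
  by (simp add: fps_two_bit)

definition r :: "nat \<Rightarrow> bit" where "r i = of_bool (rseq i)"
definition RR :: "bit fps" where "RR = Abs_fps r"

lemma rseq0: "rseq 0" unfolding rseq_def by (rule exI[of _ 0]) simp

lemma rseq_odd: "rseq (2*k+1) \<longleftrightarrow> rseq k"
proof
  assume "rseq (2*k+1)"
  then obtain j where j: "2*k+1 = 2^j - 1" unfolding rseq_def by blast
  then have "j \<noteq> 0" by (cases j) auto
  then obtain i where "j = Suc i" by (cases j) auto
  with j have "k = 2^i - 1" by simp
  then show "rseq k" unfolding rseq_def by blast
next
  assume "rseq k"
  then obtain j where j: "k = 2^j - 1" unfolding rseq_def by blast
  define x where "x = (2::nat)^j"
  have x1: "x \<ge> 1" unfolding x_def by simp
  have "2*k+1 = 2*x - 1" using j x1 unfolding x_def[symmetric] by arith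
  then have "2*k+1 = 2^(Suc j) - 1" unfolding x_def by simp
  then show "rseq (2*k+1)" unfolding rseq_def by blast
qed

lemma rseq_even: "\<not> rseq (2*k+2)"
proof
  assume "rseq (2*k+2)"
  then obtain j where j: "2*k+2 = 2^j - 1" unfolding rseq_def by blast
  show False
  proof (cases j)
    case 0 then show ?thesis using j by simp
  next
    case (Suc i)
    have "(2::nat)^i \<ge> 1" by simp
    moreover have "2*k+2 = 2 * 2^i - 1" using j Suc by simp
    ultimately show ?thesis by presburger
  qed
qed


lemma sym_sum_bit:
  fixes h :: "nat \<Rightarrow> bit"
  assumes sym: "\<And>i. i \<le> n \<Longrightarrow> h i = h (n - i)"
  shows "(\<Sum>i=0..n. h i) = (if even n then h (n div 2) else 0)"
proof -
  define A where "A = {i. 2*i < n}"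
  define B where "B = {i. i \<le> n \<and> 2*i > n}"
  define M where "M = {i. 2*i = n}"
  have fin: "finite A" "finite B" "finite M"
    unfolding A_def B_def M_def by (auto intro: finite_subset[of _ "{..n}"])
  have split: "{0..n} = A \<union> (B \<union> M)" unfolding A_def B_def M_def by auto
  have "(\<Sum>i=0..n. h i) = sum h A + (sum h B + sum h M)"
  proof -
    have d1: "B \<inter> M = {}" "A \<inter> (B \<union> M) = {}" unfolding A_def B_def M_def by auto
    have "sum h (B \<union> M) = sum h B + sum h M" using fin d1 by (simp add: sum.union_disjoint)
    moreover have "sum h (A \<union> (B \<union> M)) = sum h A + sum h (B \<union> M)"
      using fin d1 by (simp add: sum.union_disjoint)
    ultimately show ?thesis unfolding split by simp
  qed
  moreover have "sum h A = sum h B"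
    by (rule sum.reindex_bij_witness[of A "\<lambda>i. n - i" "\<lambda>i. n - i"])
       (auto simp: A_def B_def intro: sym[symmetric])
  moreover have "sum h M = (if even n then h (n div 2) else 0)"
  proof (cases "even n")
    case True
    then have "M = {n div 2}" unfolding M_def by auto
    then show ?thesis using True by simp
  next
    case False
    then have "M = {}" unfolding M_def by auto
    then show ?thesis using False by simp
  qed
  ultimately show ?thesis by (metis add.assoc bit_add_self add_0)
qed

lemma r_succ: "r (Suc n) = (if even n then r (n div 2) else 0)"
proof (cases "even n")
  case True
  then obtain k where "n = 2*k" by blast
  then show ?thesis using rseq_odd[of k] by (simp add: r_def)
next
  case False
  then obtain k where "n = 2*k+1" by (metis oddE)
  then show ?thesis using rseq_even[of k] by (simp add: r_def)
qed

lemma r0: "r 0 = 1" by (simp add: r_def rseq0)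

lemma RR_sq_nth: "(RR^2) $ n = (if even n then r (n div 2) else 0)"
proof -
  have "(RR^2) $ n = (\<Sum>i=0..n. r i * r (n - i))"
    by (simp add: power2_eq_square fps_mult_nth RR_def)
  also have "\<dots> = (if even n then r (n div 2) * r (n - n div 2) else 0)"
    by (rule sym_sum_bit) (simp add: mult.commute)
  also have "\<dots> = (if even n then r (n div 2) else 0)"
    by (auto elim!: evenE)
  finally show ?thesis .
qed

lemma quad: "fps_X * RR^2 + RR + 1 = (0::bit fps)"
proof (rule fps_ext)
  fix n
  show "(fps_X * RR^2 + RR + 1) $ n = 0 $ n"
  proof (cases n)
    case 0 then show ?thesis by (simp add: RR_def r0)
  next
    case (Suc m)
    have "(fps_X * RR^2 + RR + 1) $ n = (RR^2) $ m + r (Suc m)"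
      using Suc by (simp add: RR_def)
    then show ?thesis by (simp add: RR_sq_nth r_succ)
  qed
qed



fun PP :: "nat \<Rightarrow> bit fps" where
  "PP 0 = 1"
| "PP (Suc 0) = 1 + fps_X"
| "PP (Suc (Suc k)) = PP (Suc k) + fps_X^2 * PP k"

fun QQ :: "nat \<Rightarrow> bit fps" where
  "QQ 0 = 0"
| "QQ (Suc 0) = 1"
| "QQ (Suc (Suc k)) = QQ (Suc k) + fps_X^2 * QQ k"

lemma Didt: "PP (Suc k) * QQ k + PP k * QQ (Suc k) = fps_X^(2*k)"
proof (induction k)
  case 0 then show ?case by simp
next
  case (Suc k)
  have "PP (Suc (Suc k)) * QQ (Suc k) + PP (Suc k) * QQ (Suc (Suc k))
     = 2 * (PP (Suc k) * QQ (Suc k)) + fps_X^2 * (PP (Suc k) * QQ k + PP k * QQ (Suc k))"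
    by (simp only: PP.simps QQ.simps) algebra
  also have "\<dots> = fps_X^2 * fps_X^(2*k)" using Suc by (simp add: fps_two_mult_bit)
  also have "\<dots> = fps_X^(2 * Suc k)" by (simp add: power_add[symmetric])
  finally show ?case .
qed

lemma Gidt: "fps_X * QQ k ^ 2 + PP k * QQ k + PP k ^ 2 = fps_X^(2*k)"
proof (induction k rule: PP.induct)
  case 1 then show ?case by simp
next
  case 2
  have "fps_X * QQ (Suc 0) ^ 2 + PP (Suc 0) * QQ (Suc 0) + PP (Suc 0) ^ 2
      = 2 * (1 + 2 * fps_X) + (fps_X::bit fps)^2"
    by (simp only: PP.simps QQ.simps power2_eq_square ring_distribs mult_1_left mult_1_right) algebra
  also have "\<dots> = fps_X^(2 * Suc 0)" by (simp only: fps_two_mult_bit add_0_left) simp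
  finally show ?case .
next
  case (3 k)
  let ?Pa = "PP (Suc k)" and ?Pb = "PP k" and ?Qa = "QQ (Suc k)" and ?Qb = "QQ k"
  let ?X = "fps_X :: bit fps"
  have "?X * QQ (Suc (Suc k)) ^ 2 + PP (Suc (Suc k)) * QQ (Suc (Suc k)) + PP (Suc (Suc k)) ^ 2
      = (?X * ?Qa^2 + ?Pa*?Qa + ?Pa^2) + ?X^4 * (?X * ?Qb^2 + ?Pb*?Qb + ?Pb^2)
        + ?X^2 * (?Pa * ?Qb + ?Pb * ?Qa) + 2 * (?X^3 * ?Qa * ?Qb + ?X^2 * ?Pa * ?Pb)"
    by (simp only: PP.simps QQ.simps) algebra
  also have "\<dots> = ?X^2 * ?X^(2*k) + ?X^4 * ?X^(2*k) + ?X^2 * ?X^(2*k)"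
    using 3 Didt[of k] by (simp add: fps_two_mult_bit power_add[symmetric])
  also have "\<dots> = 2 * (?X^2 * ?X^(2*k)) + ?X^4 * ?X^(2*k)" by algebra
  also have "\<dots> = ?X^4 * ?X^(2*k)" by (simp only: fps_two_mult_bit add_0_left)
  also have "\<dots> = ?X^(2 * Suc (Suc k))"
  proof -
    have "2 * Suc (Suc k) = 4 + 2*k" by simp
    then show ?thesis by (simp only: power_add)
  qed
  finally show ?case .
qed

definition EE :: "nat \<Rightarrow> bit fps" where "EE k = PP k * RR + QQ k"

lemma EE_eq: "EE k * (fps_X * EE k + PP k) = fps_X^(2*k)"
proof -
  let ?P = "PP k" and ?Q = "QQ k" and ?X = "fps_X :: bit fps"
  have "EE k * (fps_X * EE k + PP k)
     = (?X * ?Q^2 + ?P*?Q + ?P^2) + ?P^2 * (?X * RR^2 + RR + 1) + 2 * (?X * ?P * RR * ?Q) - 2 * ?P^2"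
    unfolding EE_def by algebra
  then show ?thesis by (simp add: quad Gidt fps_two_mult_bit)
qed

lemma PP0: "PP k $ 0 = 1"
  by (induction k rule: PP.induct) simp_all

lemma PP_hi: "j > k \<Longrightarrow> PP k $ j = 0"
  by (induction k arbitrary: j rule: PP.induct) (simp_all add: fps_X_power_mult_nth)

lemma PP_top: "PP k $ k = 1"
  by (induction k rule: PP.induct) (simp_all add: fps_X_power_mult_nth PP_hi)

lemma QQ_hi: "j \<ge> k \<Longrightarrow> QQ k $ j = 0"
  by (induction k arbitrary: j rule: QQ.induct) (simp_all add: fps_X_power_mult_nth)

lemma EE_nth: "j < 2*k \<Longrightarrow> EE k $ j = 0" and EE_nth2: "EE k $ (2*k) = 1"
proof -
  let ?U = "fps_X * EE k + PP k"
  have U0: "?U $ 0 = 1" by (simp add: PP0)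
  have ne: "EE k \<noteq> 0" using EE_eq[of k] by auto
  have Une: "?U \<noteq> 0" using U0 by (metis fps_zero_nth zero_neq_one)
  have "subdegree (EE k * ?U) = 2*k" using EE_eq[of k] by simp
  then have sd: "subdegree (EE k) = 2*k" using ne Une U0 by simp
  show "j < 2*k \<Longrightarrow> EE k $ j = 0" using sd by (metis nth_less_subdegree_zero)
  show "EE k $ (2*k) = 1" using sd ne nth_subdegree_nonzero[of "EE k"] by (metis bit_not_zero_iff)
qed

lemma PPR_zero: "k \<le> t \<Longrightarrow> t < 2*k \<Longrightarrow> (PP k * RR) $ t = 0"
  using EE_nth[of t k] QQ_hi[of k t] by (simp add: EE_def)

lemma PPR_one: "(PP k * RR) $ (2*k) = 1"
  using EE_nth2[of k] QQ_hi[of k "2*k"] by (simp add: EE_def)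



definition ann :: "nat \<Rightarrow> nat \<Rightarrow> bit fps \<Rightarrow> bool" where
  "ann n d C \<longleftrightarrow> C $ 0 = 1 \<and> (\<forall>j>d. C $ j = 0) \<and> (\<forall>t. d \<le> t \<and> t \<le> n \<longrightarrow> (C * RR) $ t = 0)"

lemma ann_mono: "ann n d C \<Longrightarrow> m \<le> n \<Longrightarrow> ann m d C"
  unfolding ann_def by auto

lemma ann_d0: "\<not> ann n 0 C"
proof
  assume a: "ann n 0 C"
  have "C = 1"
  proof (rule fps_ext)
    fix j show "C $ j = 1 $ j" using a unfolding ann_def by (cases j) auto
  qed
  then have "(C * RR) $ 0 = 1" by (simp add: RR_def r0)
  with a show False unfolding ann_def by auto
qed

lemma ann_PP: "n < 2*k \<Longrightarrow> ann n k (PP k)"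
  unfolding ann_def using PP0 PP_hi PPR_zero by auto

lemma ann_PP2: "ann (2*m) (Suc m) (PP (Suc m) + fps_X * PP m)"
  unfolding ann_def
proof (intro conjI allI impI)
  show "(PP (Suc m) + fps_X * PP m) $ 0 = 1" by (simp add: PP0)
next
  fix j assume "Suc m < j"
  then show "(PP (Suc m) + fps_X * PP m) $ j = 0"
    by (cases j) (simp_all add: PP_hi)
next
  fix t assume t: "Suc m \<le> t \<and> t \<le> 2 * m"
  then obtain s where s: "t = Suc s" by (cases t) auto
  have "((PP (Suc m) + fps_X * PP m) * RR) $ t = (PP (Suc m) * RR) $ t + (fps_X * (PP m * RR)) $ t"
    by (simp add: distrib_right mult.assoc)
  also have "\<dots> = 0" using t s PPR_zero[of "Suc m" t] PPR_zero[of m s] by simp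
  finally show "((PP (Suc m) + fps_X * PP m) * RR) $ t = 0" .
qed

lemma ann_diff:
  assumes a: "ann n d C" and b: "ann n d C'" and ne: "C \<noteq> C'" and dn: "d \<le> n"
  shows "\<exists>j0 E. 1 \<le> j0 \<and> j0 \<le> d \<and> ann (n - j0) (d - j0) E \<and> C - C' = E * fps_X ^ j0"
proof -
  define F where "F = C - C'"
  define j0 where "j0 = subdegree F"
  define E where "E = fps_shift j0 F"
  have Fne: "F \<noteq> 0" using ne unfolding F_def by simp
  have F0: "F $ 0 = 0" using a b unfolding F_def ann_def by simp
  have j1: "1 \<le> j0" using Fne F0 unfolding j0_def by (metis less_one not_le subdegree_eq_0_iff)
  have Fj: "F $ j0 \<noteq> 0" using Fne unfolding j0_def by simp
  have jd: "j0 \<le> d"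
  proof (rule ccontr)
    assume "\<not> j0 \<le> d"
    then have "C $ j0 = 0" "C' $ j0 = 0" using a b unfolding ann_def by auto
    then show False using Fj unfolding F_def by simp
  qed
  have FE: "F = E * fps_X ^ j0" unfolding E_def j0_def by (simp add: fps_shift_times_fps_X_power)
  have "ann (n - j0) (d - j0) E"
    unfolding ann_def
  proof (intro conjI allI impI)
    show "E $ 0 = 1" using Fj unfolding E_def by simp
  next
    fix k assume "d - j0 < k"
    then have "k + j0 > d" using jd by simp
    then show "E $ k = 0" using a b unfolding E_def F_def ann_def by simp
  next
    fix s assume s: "d - j0 \<le> s \<and> s \<le> n - j0"
    have "(F * RR) $ (s + j0) = (fps_X ^ j0 * (E * RR)) $ (s + j0)"
      unfolding FE by (simp add: mult_ac)
    also have "\<dots> = (E * RR) $ s" by (simp add: fps_X_power_mult_nth)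
    finally have eq: "(E * RR) $ s = (F * RR) $ (s + j0)" by simp
    have "d \<le> s + j0" "s + j0 \<le> n" using s jd dn by auto
    then have "(C * RR) $ (s + j0) = 0" "(C' * RR) $ (s + j0) = 0" using a b unfolding ann_def by auto
    then show "(E * RR) $ s = 0" unfolding eq F_def by (simp add: left_diff_distrib)
  qed
  then show ?thesis using j1 jd FE unfolding F_def by blast
qed

lemma LB: "ann n d C \<Longrightarrow> n div 2 + 1 \<le> d"
proof (induction n arbitrary: d C rule: less_induct)
  case (less n)
  have d1: "1 \<le> d" using less.prems ann_d0 by (cases d) auto
  show ?case
  proof (cases n)
    case 0 then show ?thesis using d1 by simp
  next
    case (Suc n')
    have IH1: "n' div 2 + 1 \<le> d" using less.IH[of n' d C] less.prems ann_mono Suc by auto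
    show ?thesis
    proof (cases "even n'")
      case True then show ?thesis using IH1 Suc by auto
    next
      case False
      then obtain m where m: "n' = 2*m+1" by (metis oddE)
      have dm: "m + 1 \<le> d" using IH1 m by simp
      show ?thesis
      proof (rule ccontr)
        assume "\<not> ?thesis"
        then have dd: "d = Suc m" using dm Suc m by simp
        have aC: "ann (2*m+1) (Suc m) C" using less.prems ann_mono Suc m dd by auto
        have aP: "ann (2*m+1) (Suc m) (PP (Suc m))" by (rule ann_PP) simp
        have "C = PP (Suc m)"
        proof (rule ccontr)
          assume "C \<noteq> PP (Suc m)"
          from ann_diff[OF aC aP this] obtain j0 E where
            j: "1 \<le> j0" "j0 \<le> Suc m" "ann (2*m+1 - j0) (Suc m - j0) E" by auto
          have "(2*m+1 - j0) div 2 + 1 \<le> Suc m - j0"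
            using less.IH[of "2*m+1-j0"] j Suc m by auto
          then show False using j by presburger
        qed
        then have "(C * RR) $ (2 * Suc m) = 1" using PPR_one[of "Suc m"] by simp
        moreover have "(C * RR) $ (2 * Suc m) = 0"
          using less.prems dd Suc m unfolding ann_def by auto
        ultimately show False by simp
      qed
    qed
  qed
qed

lemma uniq_odd: "ann (2*m+1) (Suc m) C \<Longrightarrow> C = PP (Suc m)"
proof (rule ccontr)
  assume aC: "ann (2*m+1) (Suc m) C" and ne: "C \<noteq> PP (Suc m)"
  have aP: "ann (2*m+1) (Suc m) (PP (Suc m))" by (rule ann_PP) simp
  from ann_diff[OF aC aP ne] obtain j0 E where
    j: "1 \<le> j0" "j0 \<le> Suc m" "ann (2*m+1 - j0) (Suc m - j0) E" by auto
  have "(2*m+1 - j0) div 2 + 1 \<le> Suc m - j0" using LB j by blast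
  then show False using j by presburger
qed

lemma char_even: "ann (2*m) (Suc m) C \<Longrightarrow> C = PP (Suc m) \<or> C = PP (Suc m) + fps_X * PP m"
proof (cases m)
  case 0
  assume a: "ann (2*m) (Suc m) C"
  have c0: "C $ 0 = 1" and chi: "\<And>j. j > 1 \<Longrightarrow> C $ j = 0" using a 0 unfolding ann_def by auto
  show ?thesis
  proof (cases "C $ 1 = 1")
    case True
    have "C = PP (Suc m)"
    proof (rule fps_ext)
      fix j show "C $ j = PP (Suc m) $ j" using c0 chi True 0
        by (cases j) (auto simp: less_Suc_eq_0_disj)
    qed
    then show ?thesis by simp
  next
    case False
    have h: "PP (Suc 0) + fps_X * PP 0 = (1::bit fps)"
      by (simp only: PP.simps mult_1_right add.assoc fps_bit_add_self add_0_right)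
    have "C = 1"
    proof (rule fps_ext)
      fix j show "C $ j = 1 $ j"
      proof (cases "j \<le> 1")
        case True then show ?thesis using c0 False by (cases j) auto
      next
        case False then show ?thesis using chi by simp
      qed
    qed
    then have "C = PP (Suc m) + fps_X * PP m" using h 0 by simp
    then show ?thesis by simp
  qed
next
  case (Suc m')
  assume aC: "ann (2*m) (Suc m) C"
  show ?thesis
  proof (rule ccontr)
    assume "\<not> ?thesis"
    then have ne: "C \<noteq> PP (Suc m)" and ne2: "C \<noteq> PP (Suc m) + fps_X * PP m" by auto
    have aP: "ann (2*m) (Suc m) (PP (Suc m))" by (rule ann_PP) simp
    from ann_diff[OF aC aP ne] Suc obtain j0 E where
      j: "1 \<le> j0" "j0 \<le> Suc m" "ann (2*m - j0) (Suc m - j0) E" "C - PP (Suc m) = E * fps_X ^ j0"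
      by auto
    have "(2*m - j0) div 2 + 1 \<le> Suc m - j0" using LB j by blast
    then have j01: "j0 = 1" using j Suc by presburger
    have "ann (2*m'+1) (Suc m') E" using j j01 Suc by (simp add: mult_2)
    then have "E = PP m" using uniq_odd Suc by simp
    then have "C = PP (Suc m) + fps_X * PP m" using j(4) j01 by (simp add: algebra_simps)
    with ne2 show False by simp
  qed
qed



definition hom :: "nat \<Rightarrow> bit fps \<Rightarrow> poly2" where
  "hom d C = {(p,q). p + q = d \<and> C $ q = 1}"

lemma bit_add_eq1: "((a::bit) + b = 1) \<longleftrightarrow> ((a = 1) \<noteq> (b = 1))"
  by (cases a; cases b) simp_all

lemma bit_mult_eq1: "((a::bit) * b = 1) \<longleftrightarrow> (a = 1 \<and> b = 1)"
  by (cases a; cases b) simp_all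

lemma of_nat_bit: "(of_nat n :: bit) = (if odd n then 1 else 0)"
  by (induction n) auto

lemma hom_finite: "finite (hom d C)"
  by (rule finite_subset[of _ "{..d} \<times> {..d}"]) (auto simp: hom_def)

lemma hom_form: "is_form (hom d C)"
  unfolding is_form_def using hom_finite by (auto simp: hom_def)

lemma tdeg_hom: "C $ q = 1 \<Longrightarrow> q \<le> d \<Longrightarrow> tdeg (hom d C) = d"
proof -
  assume a: "C $ q = 1" "q \<le> d"
  have "(\<lambda>(p,q). p + q) ` hom d C = {d}"
  proof
    show "(\<lambda>(p,q). p + q) ` hom d C \<subseteq> {d}" by (auto simp: hom_def)
    have "(d - q, q) \<in> hom d C" using a by (simp add: hom_def)
    then show "{d} \<subseteq> (\<lambda>(p,q). p + q) ` hom d C" using a(2) by force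
  qed
  then show ?thesis by (simp add: tdeg_def)
qed

lemma padd_hom: "padd (hom d A) (hom d B) = hom d (A + B)"
  unfolding padd_def hom_def by (auto simp: bit_add_eq1)

lemma xshift_hom: "(\<forall>j>d. C $ j = 0) \<Longrightarrow> xshift a (hom d C) = hom (d + a) C"
proof -
  assume hi: "\<forall>j>d. C $ j = 0"
  show ?thesis
  proof
    show "xshift a (hom d C) \<subseteq> hom (d + a) C" unfolding xshift_def hom_def by auto
    show "hom (d + a) C \<subseteq> xshift a (hom d C)"
    proof
      fix x assume x: "x \<in> hom (d + a) C"
      obtain p q where pq: "x = (p,q)" by (cases x)
      have q: "p + q = d + a" "C $ q = 1" using x pq by (auto simp: hom_def)
      then have "q \<le> d" using hi by (metis not_le zero_neq_one)
      then have "(p - a, q) \<in> hom d C" "x = (p - a + a, q)" using q pq by (auto simp: hom_def)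
      then show "x \<in> xshift a (hom d C)" unfolding xshift_def by force
    qed
  qed
qed

lemma zshift_hom: "zshift 1 (hom d C) = hom (d + 1) (fps_X * C)"
proof
  show "zshift 1 (hom d C) \<subseteq> hom (d + 1) (fps_X * C)" unfolding zshift_def hom_def by auto
  show "hom (d + 1) (fps_X * C) \<subseteq> zshift 1 (hom d C)"
  proof
    fix x assume x: "x \<in> hom (d + 1) (fps_X * C)"
    obtain p q where pq: "x = (p,q)" by (cases x)
    have q: "p + q = d + 1" "(fps_X * C) $ q = 1" using x pq by (auto simp: hom_def)
    then have q1: "q \<ge> 1" by (cases q) auto
    then have "(p, q - 1) \<in> hom d C" "x = (p, q - 1 + 1)" using q pq by (auto simp: hom_def)
    then show "x \<in> zshift 1 (hom d C)" unfolding zshift_def by force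
  qed
qed

lemma tdeg_Rn: "tdeg (Rn N) = N"
proof -
  have "(\<lambda>(p,q). p + q) ` Rn N = {N}"
  proof
    show "(\<lambda>(p,q). p + q) ` Rn N \<subseteq> {N}" by (auto simp: Rn_def)
    have "(0, N) \<in> Rn N" using rseq0 by (auto simp: Rn_def)
    then show "{N} \<subseteq> (\<lambda>(p,q). p + q) ` Rn N" by force
  qed
  then show ?thesis by (simp add: tdeg_def)
qed

definition JJ :: "nat \<Rightarrow> bit fps \<Rightarrow> nat \<Rightarrow> nat set" where
  "JJ d C t = {j. j \<le> d \<and> C $ j = 1 \<and> rseq (t - j)}"

lemma JJ_finite: "finite (JJ d C t)"
  by (rule finite_subset[of _ "{..d}"]) (auto simp: JJ_def)

lemma conv_card:
  assumes hi: "\<forall>j>d. C $ j = 0" and dt: "d \<le> t"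
  shows "(C * RR) $ t = of_nat (card (JJ d C t))"
proof -
  have "(C * RR) $ t = (\<Sum>i=0..t. C $ i * r (t - i))" by (simp add: fps_mult_nth RR_def)
  also have "\<dots> = (\<Sum>i\<in>{0..t}. of_bool (i \<in> JJ d C t))"
  proof (rule sum.cong)
    fix i assume "i \<in> {0..t}"
    show "C $ i * r (t - i) = of_bool (i \<in> JJ d C t)"
    proof (cases "i \<le> d")
      case True then show ?thesis by (cases "C $ i"; simp add: JJ_def r_def)
    next
      case False then show ?thesis using hi by (simp add: JJ_def)
    qed
  qed simp
  also have "\<dots> = of_nat (card ({0..t} \<inter> {i. i \<in> JJ d C t}))" by simp
  also have "{0..t} \<inter> {i. i \<in> JJ d C t} = JJ d C t" using dt by (auto simp: JJ_def)
  finally show ?thesis .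
qed

lemma conv_zero_iff:
  "\<forall>j>d. C $ j = 0 \<Longrightarrow> d \<le> t \<Longrightarrow> (C * RR) $ t = 0 \<longleftrightarrow> even (card (JJ d C t))"
  using conv_card by (simp add: of_nat_bit)

lemma conv_one_iff:
  "\<forall>j>d. C $ j = 0 \<Longrightarrow> d \<le> t \<Longrightarrow> (C * RR) $ t = 1 \<longleftrightarrow> odd (card (JJ d C t))"
  using conv_card by (simp add: of_nat_bit)



lemma Delta_hom:
  assumes c0: "C $ 0 = 1" and hi: "\<forall>j>d. C $ j = 0" and dN: "d \<le> N"
  shows "Delta (hom d C) (Rn N) \<longleftrightarrow> (C * RR) $ N = 1"
proof -
  have td: "tdeg (hom d C) = d" using tdeg_hom[of C 0 d] c0 by simp
  define X where "X = {(m,w) \<in> hom d C \<times> Rn N.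
      int (fst m) - int (fst w) = int d - int N \<and> int (snd m) - int (snd w) = 0}"
  have XI: "X = (\<lambda>j. ((d-j, j), (N-j, j))) ` JJ d C N"
  proof
    show "X \<subseteq> (\<lambda>j. ((d-j, j), (N-j, j))) ` JJ d C N"
    proof
      fix x assume xX: "x \<in> X"
      obtain p q w where xm: "x = ((p,q),w)" by (metis prod.collapse)
      have m: "(p,q) \<in> hom d C" and w: "w \<in> Rn N"
        and c1: "int p - int (fst w) = int d - int N" and c2: "int q - int (snd w) = 0"
        using xX unfolding X_def xm by auto
      obtain i where wi: "w = (i, N - i)" "i \<le> N" "rseq i" using w unfolding Rn_def by blast
      have x: "x = ((p,q),(i, N - i))" "p + q = d" "C $ q = 1" "i \<le> N" "rseq i"
        "int p - int i = int d - int N" "int q - int (N - i) = 0"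
        using xm m wi c1 c2 unfolding hom_def by auto
      then have h: "N - i = q" "p = d - q" "i = N - q" "q \<le> d" by linarith+
      have "x = ((d-q, q), (N-q, q))" using x(1) h by simp
      moreover have "q \<in> JJ d C N" unfolding JJ_def using h x(3) x(5) by simp
      ultimately show "x \<in> (\<lambda>j. ((d-j, j), (N-j, j))) ` JJ d C N" by blast
    qed
    show "(\<lambda>j. ((d-j, j), (N-j, j))) ` JJ d C N \<subseteq> X"
    proof
      fix x assume "x \<in> (\<lambda>j. ((d-j, j), (N-j, j))) ` JJ d C N"
      then obtain j where j: "x = ((d-j, j), (N-j, j))" "j \<le> d" "C $ j = 1" "rseq (N - j)"
        unfolding JJ_def by auto
      have "(N - j, j) \<in> Rn N" unfolding Rn_def using j dN by (intro CollectI exI[of _ "N-j"]) auto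
      moreover have "(d - j, j) \<in> hom d C" using j by (simp add: hom_def)
      ultimately show "x \<in> X" unfolding X_def using j dN by auto
    qed
  qed
  have "card X = card (JJ d C N)" unfolding XI by (rule card_image) (auto simp: inj_on_def)
  moreover have "Delta (hom d C) (Rn N) \<longleftrightarrow> odd (card X)"
    unfolding Delta_def td tdeg_Rn laurent_coeff_def X_def using dN by simp
  ultimately show ?thesis using conv_one_iff[OF hi dN] by simp
qed

definition SS :: "nat \<Rightarrow> bit fps \<Rightarrow> nat \<Rightarrow> nat \<Rightarrow> nat \<Rightarrow> ((nat \<times> nat) \<times> (nat \<times> nat)) set" where
  "SS d C n a b = {(m,w) \<in> hom d C \<times> Rn n.
      fst m \<le> fst w \<and> snd m \<le> snd w \<and> fst w - fst m = a \<and> snd w - snd m = b}"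

lemma SS_card: "card (SS d C n a b) = (if a + b + d = n then card (JJ d C (a + d)) else 0)"
proof (cases "a + b + d = n")
  case True
  have XI: "SS d C n a b = (\<lambda>j. ((d-j, j), (a+d-j, n-(a+d-j)))) ` JJ d C (a+d)"
  proof
    show "SS d C n a b \<subseteq> (\<lambda>j. ((d-j, j), (a+d-j, n-(a+d-j)))) ` JJ d C (a+d)"
    proof
      fix x assume xX: "x \<in> SS d C n a b"
      obtain p q w where xm: "x = ((p,q),w)" by (metis prod.collapse)
      have m: "(p,q) \<in> hom d C" and w: "w \<in> Rn n"
        and c: "p \<le> fst w" "q \<le> snd w" "fst w - p = a" "snd w - q = b"
        using xX unfolding SS_def xm by auto
      obtain i where wi: "w = (i, n - i)" "i \<le> n" "rseq i" using w unfolding Rn_def by blast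
      have x: "x = ((p,q),(i, n - i))" "p + q = d" "C $ q = 1" "i \<le> n" "rseq i"
        "p \<le> i" "q \<le> n - i" "i - p = a" "n - i - q = b"
        using xm m wi c unfolding hom_def by auto
      then have h: "p = d - q" "i = a + d - q" "q \<le> d" by linarith+
      have "x = ((d-q, q), (a+d-q, n-(a+d-q)))" using x(1) h by simp
      moreover have "q \<in> JJ d C (a+d)" unfolding JJ_def using h x(3) x(5) by simp
      ultimately show "x \<in> (\<lambda>j. ((d-j, j), (a+d-j, n-(a+d-j)))) ` JJ d C (a+d)" by blast
    qed
    show "(\<lambda>j. ((d-j, j), (a+d-j, n-(a+d-j)))) ` JJ d C (a+d) \<subseteq> SS d C n a b"
    proof
      fix x assume "x \<in> (\<lambda>j. ((d-j, j), (a+d-j, n-(a+d-j)))) ` JJ d C (a+d)"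
      then obtain j where j: "x = ((d-j, j), (a+d-j, n-(a+d-j)))" "j \<le> d" "C $ j = 1" "rseq (a + d - j)"
        unfolding JJ_def by auto
      have "(a+d-j, n-(a+d-j)) \<in> Rn n" unfolding Rn_def using j True
        by (intro CollectI exI[of _ "a+d-j"]) auto
      moreover have "(d - j, j) \<in> hom d C" using j by (simp add: hom_def)
      ultimately show "x \<in> SS d C n a b" unfolding SS_def using j True by auto
    qed
  qed
  have "card (SS d C n a b) = card (JJ d C (a + d))" unfolding XI by (rule card_image) (auto simp: inj_on_def)
  then show ?thesis using True by simp
next
  case False
  have "SS d C n a b = {}"
  proof (rule ccontr)
    assume "SS d C n a b \<noteq> {}"
    then obtain x where xX: "x \<in> SS d C n a b" by blast
    obtain p q w where xm: "x = ((p,q),w)" by (metis prod.collapse)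
    have m: "(p,q) \<in> hom d C" and w: "w \<in> Rn n"
      and c: "p \<le> fst w" "q \<le> snd w" "fst w - p = a" "snd w - q = b"
      using xX unfolding SS_def xm by auto
    obtain i where wi: "w = (i, n - i)" "i \<le> n" using w unfolding Rn_def by blast
    have x: "p + q = d" "i \<le> n"
        "p \<le> i" "q \<le> n - i" "i - p = a" "n - i - q = b"
      using m wi c unfolding hom_def by auto
    then have "a + b + d = n" by auto
    with False show False by simp
  qed
  then show ?thesis using False by simp
qed

lemma act_hom:
  assumes hi: "\<forall>j>d. C $ j = 0"
  shows "act (hom d C) (Rn n) = {} \<longleftrightarrow> (\<forall>t. d \<le> t \<and> t \<le> n \<longrightarrow> (C * RR) $ t = 0)"
proof -
  have act_eq: "act (hom d C) (Rn n) = {(a,b). odd (card (SS d C n a b))}"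
    unfolding act_def SS_def by simp
  show ?thesis
  proof
    assume e: "act (hom d C) (Rn n) = {}"
    show "\<forall>t. d \<le> t \<and> t \<le> n \<longrightarrow> (C * RR) $ t = 0"
    proof (intro allI impI)
      fix t assume t: "d \<le> t \<and> t \<le> n"
      have "(t - d, n - t) \<notin> act (hom d C) (Rn n)" using e by simp
      then have "even (card (SS d C n (t - d) (n - t)))" unfolding act_eq by simp
      then have "even (card (JJ d C t))" using t SS_card[of d C n "t - d" "n - t"] by simp
      then show "(C * RR) $ t = 0" using conv_zero_iff[OF hi] t by simp
    qed
  next
    assume z: "\<forall>t. d \<le> t \<and> t \<le> n \<longrightarrow> (C * RR) $ t = 0"
    have "even (card (SS d C n a b))" for a b
    proof (cases "a + b + d = n")
      case True
      then have "(C * RR) $ (a + d) = 0" using z by simp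
      then have "even (card (JJ d C (a + d)))" using conv_zero_iff[OF hi, of "a + d"] by simp
      then show ?thesis using SS_card True by simp
    next
      case False then show ?thesis using SS_card by simp
    qed
    then show "act (hom d C) (Rn n) = {}" unfolding act_eq by auto
  qed
qed



lemma L1: assumes a: "ann n d C"
  shows "hom d C \<in> In n \<inter> Lset" and "tdeg (hom d C) = d"
proof -
  have c0: "C $ 0 = 1" and hi: "\<forall>j>d. C $ j = 0" and z: "\<forall>t. d \<le> t \<and> t \<le> n \<longrightarrow> (C * RR) $ t = 0"
    using a unfolding ann_def by auto
  show td: "tdeg (hom d C) = d" using tdeg_hom[of C 0 d] c0 by simp
  have "(d, 0) \<in> hom d C" using c0 by (simp add: hom_def)
  then have "hom d C \<in> Lset" unfolding Lset_def using hom_form td by auto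
  moreover have "hom d C \<in> In n" unfolding In_def annih_def
    using hom_finite act_hom[OF hi] z by auto
  ultimately show "hom d C \<in> In n \<inter> Lset" by simp
qed

lemma L2: assumes th: "\<theta> \<in> In n \<inter> Lset"
  shows "\<exists>C. \<theta> = hom (tdeg \<theta>) C \<and> ann n (tdeg \<theta>) C"
proof -
  have L: "is_form \<theta>" "\<theta> \<noteq> {}" "(tdeg \<theta>, 0) \<in> \<theta>" using th unfolding Lset_def by auto
  have fin: "finite \<theta>" and act0: "act \<theta> (Rn n) = {}" using th unfolding In_def annih_def by auto
  obtain d0 where d0: "\<forall>(p,q)\<in>\<theta>. p + q = d0" using L(1) unfolding is_form_def by auto
  define d where "d = tdeg \<theta>"
  have "d = d0" using d0 L(3) unfolding d_def by fastforce
  then have dd: "\<forall>(p,q)\<in>\<theta>. p + q = d" using d0 by simp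
  define C where "C = Abs_fps (\<lambda>j. if j \<le> d \<and> (d - j, j) \<in> \<theta> then 1 else (0::bit))"
  have hC: "\<theta> = hom d C"
  proof
    show "\<theta> \<subseteq> hom d C"
    proof
      fix x assume x: "x \<in> \<theta>"
      obtain p q where pq: "x = (p,q)" by (cases x)
      have "p + q = d" using dd x pq by auto
      then show "x \<in> hom d C" using x pq unfolding hom_def C_def
        by (auto simp: add.commute)
    qed
    show "hom d C \<subseteq> \<theta>"
    proof
      fix x assume x: "x \<in> hom d C"
      obtain p q where pq: "x = (p,q)" by (cases x)
      have "p + q = d" "q \<le> d" "(d - q, q) \<in> \<theta>" using x pq unfolding hom_def C_def
        by (auto split: if_splits)
      then show "x \<in> \<theta>" using pq by (metis add_diff_cancel_right')
    qed
  qed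
  have c0: "C $ 0 = 1" using L(3) unfolding C_def d_def by simp
  have hi: "\<forall>j>d. C $ j = 0" unfolding C_def by simp
  have "\<forall>t. d \<le> t \<and> t \<le> n \<longrightarrow> (C * RR) $ t = 0" using act_hom[OF hi] act0 hC by simp
  then have "ann n d C" unfolding ann_def using c0 hi by simp
  then show ?thesis using hC unfolding d_def by blast
qed

lemma step_even:
  assumes fk: "fg (2*m) = (hom (Suc m) (PP (Suc m)), g)"
  shows "fg (Suc (2*m)) = (hom (Suc m) (PP (Suc m)), zshift 1 g)"
proof -
  have "\<not> Delta (hom (Suc m) (PP (Suc m))) (Rn (Suc (2*m)))"
    using Delta_hom[of "PP (Suc m)" "Suc m" "Suc (2*m)"] PP0 PP_hi PPR_zero[of "Suc m" "Suc (2*m)"]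
    by simp
  then show ?thesis using fk by (simp add: Let_def)
qed

lemma step_odd:
  assumes fk: "fg (Suc (2*m)) = (hom (Suc m) (PP (Suc m)), hom (Suc (Suc m)) (fps_X^2 * PP m))"
  shows "fg (Suc (Suc (2*m))) = (hom (Suc (Suc m)) (PP (Suc (Suc m))), hom (Suc (Suc m)) (fps_X * PP (Suc m)))"
proof -
  have D: "Delta (hom (Suc m) (PP (Suc m))) (Rn (Suc (Suc (2*m))))"
    using Delta_hom[of "PP (Suc m)" "Suc m" "Suc (Suc (2*m))"] PP0 PP_hi PPR_one[of "Suc m"]
    by simp
  have t1: "tdeg (hom (Suc m) (PP (Suc m))) = Suc m" using tdeg_hom[of "PP (Suc m)" 0] PP0 by simp
  have t2: "tdeg (hom (Suc (Suc m)) (fps_X^2 * PP m)) = Suc (Suc m)"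
    using tdeg_hom[of "fps_X^2 * PP m" 2 "Suc (Suc m)"] PP0 by (simp add: fps_X_power_mult_nth)
  have xs: "xshift 1 (hom (Suc m) (PP (Suc m))) = hom (Suc (Suc m)) (PP (Suc m))"
    using xshift_hom[of "Suc m" "PP (Suc m)" 1] PP_hi by simp
  have pa: "padd (hom (Suc (Suc m)) (PP (Suc m))) (hom (Suc (Suc m)) (fps_X^2 * PP m))
      = hom (Suc (Suc m)) (PP (Suc (Suc m)))" by (simp add: padd_hom)
  have zs: "zshift 1 (hom (Suc m) (PP (Suc m))) = hom (Suc (Suc m)) (fps_X * PP (Suc m))"
    using zshift_hom[of "Suc m" "PP (Suc m)"] by simp
  show ?thesis using fk D t1 t2 xs pa zs by (simp add: Let_def)
qed

lemma fg_form:
  "fg (2*m) = (hom (Suc m) (PP (Suc m)), hom (Suc m) (fps_X * PP m)) \<and>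
   fg (Suc (2*m)) = (hom (Suc m) (PP (Suc m)), hom (Suc (Suc m)) (fps_X^2 * PP m))"
proof (induction m)
  case 0
  have e1: "hom 1 (PP 1) = {(1,0),(0,1)}" unfolding hom_def by auto
  have e2: "hom 1 (fps_X * PP 0) = {(0,1)}" unfolding hom_def by auto
  have f0: "fg (2*0) = (hom (Suc 0) (PP (Suc 0)), hom (Suc 0) (fps_X * PP 0))"
    using e1 e2 by simp
  moreover have "fg (Suc (2*0)) = (hom (Suc 0) (PP (Suc 0)), hom (Suc (Suc 0)) (fps_X^2 * PP 0))"
    using step_even[OF f0] zshift_hom[of 1 "fps_X * PP 0"] by (simp add: power2_eq_square mult.assoc)
  ultimately show ?case by blast
next
  case (Suc m)
  have f0: "fg (2 * Suc m) = (hom (Suc (Suc m)) (PP (Suc (Suc m))), hom (Suc (Suc m)) (fps_X * PP (Suc m)))"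
  proof -
    have "2 * Suc m = Suc (Suc (2*m))" by simp
    then show ?thesis using step_odd[OF conjunct2[OF Suc.IH]] by (simp only:)
  qed
  moreover have "fg (Suc (2 * Suc m)) = (hom (Suc (Suc m)) (PP (Suc (Suc m))), hom (Suc (Suc (Suc m))) (fps_X^2 * PP (Suc m)))"
    using step_even[OF f0] zshift_hom[of "Suc (Suc m)" "fps_X * PP (Suc m)"] by (simp add: power2_eq_square mult.assoc)
  ultimately show ?case by blast
qed



lemma Theta_char: "Theta n = hom (Suc (n div 2)) ` {C. ann n (Suc (n div 2)) C}"
proof -
  define D where "D = Suc (n div 2)"
  have annP: "ann n D (PP D)" unfolding D_def by (rule ann_PP) presburger
  have lb: "D \<le> tdeg \<theta>" if th0: "\<theta> \<in> In n \<inter> Lset" for \<theta>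
  proof -
    obtain C where "\<theta> = hom (tdeg \<theta>) C" "ann n (tdeg \<theta>) C" using L2[OF th0] by blast
    then show ?thesis using LB unfolding D_def by fastforce
  qed
  have "Theta n = hom D ` {C. ann n D C}"
  proof
    show "Theta n \<subseteq> hom D ` {C. ann n D C}"
    proof
      fix \<theta> assume th: "\<theta> \<in> Theta n"
      then have th1: "\<theta> \<in> In n \<inter> Lset" and mn: "\<forall>\<theta>'\<in>In n \<inter> Lset. tdeg \<theta> \<le> tdeg \<theta>'"
        unfolding Theta_def by auto
      have "tdeg \<theta> \<le> tdeg (hom D (PP D))" using mn L1(1)[OF annP] by blast
      then have "tdeg \<theta> \<le> D" using L1(2)[OF annP] by simp
      then have "tdeg \<theta> = D" using lb[OF th1] by simp
      then show "\<theta> \<in> hom D ` {C. ann n D C}" using L2[OF th1] by auto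
    qed
    show "hom D ` {C. ann n D C} \<subseteq> Theta n"
    proof
      fix \<theta> assume "\<theta> \<in> hom D ` {C. ann n D C}"
      then obtain C where C: "\<theta> = hom D C" "ann n D C" by auto
      then show "\<theta> \<in> Theta n" unfolding Theta_def using L1[OF C(2)] lb by auto
    qed
  qed
  then show ?thesis unfolding D_def .
qed

theorem corollary4:
  fixes n :: nat
  shows "Theta n = (if odd n then {fst (fg n)}
                    else {fst (fg n), padd (fst (fg n)) (snd (fg n))})"
proof (cases "odd n")
  case True
  then obtain m where n: "n = Suc (2*m)" by (metis oddE add.commute plus_1_eq_Suc)
  have nd: "n div 2 = m" using n by simp
  have "{C. ann n (Suc m) C} = {PP (Suc m)}"
  proof
    show "{C. ann n (Suc m) C} \<subseteq> {PP (Suc m)}" using uniq_odd n by auto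
    show "{PP (Suc m)} \<subseteq> {C. ann n (Suc m) C}" using ann_PP[of n "Suc m"] n by simp
  qed
  then have "Theta n = {hom (Suc m) (PP (Suc m))}" using Theta_char[of n] nd by simp
  moreover have "fst (fg n) = hom (Suc m) (PP (Suc m))" using fg_form[of m] n by (simp del: fg.simps)
  ultimately show ?thesis using True by simp
next
  case False
  then obtain m where n: "n = 2*m" by (metis evenE not_not)
  have nd: "n div 2 = m" using n by simp
  have "{C. ann n (Suc m) C} = {PP (Suc m), PP (Suc m) + fps_X * PP m}"
  proof
    show "{C. ann n (Suc m) C} \<subseteq> {PP (Suc m), PP (Suc m) + fps_X * PP m}" using char_even n by auto
    show "{PP (Suc m), PP (Suc m) + fps_X * PP m} \<subseteq> {C. ann n (Suc m) C}"
      using ann_PP[of n "Suc m"] ann_PP2[of m] n by simp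
  qed
  then have "Theta n = {hom (Suc m) (PP (Suc m)), hom (Suc m) (PP (Suc m) + fps_X * PP m)}"
    using Theta_char[of n] nd by simp
  moreover have "fst (fg n) = hom (Suc m) (PP (Suc m))" "snd (fg n) = hom (Suc m) (fps_X * PP m)"
    using fg_form[of m] n by (simp_all del: fg.simps)
  ultimately show ?thesis using False by (simp add: padd_hom)
qed



end
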